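(* Let $\mathcal Z=\mathbb{R}^d$ and let $k$ be a continuous, shift-invariant, positive definite kernel with $\sup_zk(z,z)\le1$, written via Bochner's theorem as $k(z,z')=\int_{\mathbb{R}^d}p_k(w)\cos(\langle w,z-z'\rangle)\,dw$ with $p_k\ge0$ integrable, and let $c_k=\int p_k(w)\,dw$. Let $(w_1,b_1),\dots,(w_m,b_m)$ be i.i.d. with $w_j\sim p_k/c_k$ and $b_j\sim\mathcal U[0,2\pi]$ independent. For $z\in\mathcal Z$ set $g^z_{w,b}(\cdot)=2c_k\cos(\langle w,z\rangle+b)\cos(\langle w,\cdot\rangle+b)$ and $\hat g^z_m=\frac1m\sum_{j=1}^mg^z_{w_j,b_j}$. Then for any fixed $S=\{z_1,\dots,z_n\}\subset\mathcal Z$, any Borel probability measure $Q$ on $\mathcal Z$, and any $\delta\in(0,1)$, with probability at least $1-\delta$ over $\{(w_j,b_j)\}_{j=1}^m$, $$\Big\|\mu_k(P_S)-\frac1n\sum_{i=1}^n\hat g^{z_i}_m\Big\|_{L^2(Q)}\le\frac{2c_k}{\sqrt m}\Big(1+\sqrt{2\log(n/\delta)}\Big).$$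
   Context: $\mu_k(P_S)=\frac1n\sum_{i=1}^nk(z_i,\cdot)$ is the empirical kernel mean embedding of $S$ (viewed as an element of $L^2(Q)$). $L^2(Q)$ is the space of functions $f$ with $\int f^2\,dQ<\infty$ with norm $(\int f^2dQ)^{1/2}$. *)

theory Defs
  imports "HOL-Probability.Probability"
begin

definition bochner_kernel :: "(real^'d \<Rightarrow> real) \<Rightarrow> real^'d \<Rightarrow> real^'d \<Rightarrow> real" where
  "bochner_kernel p z z' = (LINT w|lborel. p w * cos (w \<bullet> (z - z')))"

definition ck :: "(real^'d \<Rightarrow> real) \<Rightarrow> real" where
  "ck p = (LINT w|lborel. p w)"

definition feature_dist :: "(real^'d \<Rightarrow> real) \<Rightarrow> ((real^'d) \<times> real) measure" where
  "feature_dist p = density lborel (\<lambda>w. ennreal (p w / ck p)) \<Otimes>\<^sub>M uniform_measure lborel {0..2*pi}"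

definition rf_g :: "real \<Rightarrow> real^'d \<Rightarrow> real \<Rightarrow> real^'d \<Rightarrow> real^'d \<Rightarrow> real" where
  "rf_g c w b z x = 2 * c * cos (w \<bullet> z + b) * cos (w \<bullet> x + b)"

definition ghat :: "real \<Rightarrow> nat \<Rightarrow> (nat \<Rightarrow> (real^'d) \<times> real) \<Rightarrow> real^'d \<Rightarrow> real^'d \<Rightarrow> real" where
  "ghat c m \<omega> z x = (1 / real m) * (\<Sum>j<m. rf_g c (fst (\<omega> j)) (snd (\<omega> j)) z x)"

text \<open>Empirical kernel mean embedding of S = {zs 0, ..., zs (n-1)}.\<close>
definition kme :: "('a \<Rightarrow> 'a \<Rightarrow> real) \<Rightarrow> nat \<Rightarrow> (nat \<Rightarrow> 'a) \<Rightarrow> 'a \<Rightarrow> real" where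
  "kme k n zs x = (1 / real n) * (\<Sum>i<n. k (zs i) x)"

definition L2_norm :: "'a measure \<Rightarrow> ('a \<Rightarrow> real) \<Rightarrow> real" where
  "L2_norm Q f = sqrt (LINT x|Q. (f x)^2)"

end

theory Submission
  imports Defs
begin


lemma mcdiarmid_mgf:
  fixes M :: "'a measure" and f :: "(nat \<Rightarrow> 'a) \<Rightarrow> real"
  assumes M: "prob_space M" and l: "l > 0" and c: "c \<ge> 0"
  shows "f \<in> borel_measurable (PiM {..<m} (\<lambda>_. M)) \<Longrightarrow>
     (\<And>om. om \<in> space (PiM {..<m} (\<lambda>_. M)) \<Longrightarrow> \<bar>f om\<bar> \<le> B) \<Longrightarrow>
     (\<And>om j y. om \<in> space (PiM {..<m} (\<lambda>_. M)) \<Longrightarrow> j < m \<Longrightarrow> y \<in> space M \<Longrightarrow> abs (f (om(j:=y)) - f om) \<le> c)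
     \<Longrightarrow> (\<integral>\<^sup>+om. ennreal (exp (l * (f om - (\<integral>om'. f om' \<partial>PiM {..<m} (\<lambda>_. M))))) \<partial>PiM {..<m} (\<lambda>_. M))
         \<le> ennreal (exp (l\<^sup>2 * real m * c\<^sup>2 / 8))"
proof (induction m arbitrary: f B)
  case 0
  show ?case
    by (simp add: PiM_empty lebesgue_integral_count_space_finite nn_integral_count_space_finite)
next
  case (Suc k)
  interpret Mp: prob_space M by (rule M)
  interpret product_sigma_finite "\<lambda>_. M"
    by (simp add: product_sigma_finite_def Mp.sigma_finite_measure_axioms)
  define P' where "P' = PiM {..<k} (\<lambda>_. M)"
  have Pins: "PiM {..<Suc k} (\<lambda>_. M) = PiM (insert k {..<k}) (\<lambda>_. M)"
    by (simp add: lessThan_Suc)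
  note fm = Suc.prems(1)[unfolded Pins]
  have upd_meas: "(\<lambda>z. (fst z)(k:=snd z)) \<in> measurable (P' \<Otimes>\<^sub>M M) (PiM (insert k {..<k}) (\<lambda>_. M))"
    unfolding P'_def
    by (rule measurable_fun_upd[where J="{..<k}"]) auto
  then have upd_meas: "(\<lambda>(om,y). om(k:=y)) \<in> measurable (P' \<Otimes>\<^sub>M M) (PiM (insert k {..<k}) (\<lambda>_. M))"
    by (simp add: case_prod_beta')
  have F_meas: "(\<lambda>(om,y). f (om(k:=y))) \<in> borel_measurable (P' \<Otimes>\<^sub>M M)"
    using measurable_comp[OF upd_meas fm] by (simp add: comp_def case_prod_beta')
  have upd_space: "om(k:=y) \<in> space (PiM {..<Suc k} (\<lambda>_. M))" if "om \<in> space P'" "y \<in> space M" for om y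
    using that unfolding P'_def by (auto simp: space_PiM PiE_def extensional_def Pi_def less_Suc_eq)
  define g where "g om = (\<integral>y. f (om(k:=y)) \<partial>M)" for om
  have g_meas: "g \<in> borel_measurable P'"
    unfolding g_def by (rule Mp.borel_measurable_lebesgue_integral[OF F_meas])
  have Fy_meas: "(\<lambda>y. f (om(k:=y))) \<in> borel_measurable M" if "om \<in> space P'" for om
    using measurable_comp[OF measurable_component_update fm, of om] that
    unfolding P'_def comp_def by auto
  have Fy_int: "integrable M (\<lambda>y. f (om(k:=y)))" if "om \<in> space P'" for om
    by (rule Mp.integrable_const_bound[where B=B]) (use Fy_meas[OF that] Suc.prems(2) upd_space that in auto)
  have g_bound: "\<bar>g om\<bar> \<le> B" if "om \<in> space P'" for om
  proof -
    have "\<bar>g om\<bar> \<le> (\<integral>y. \<bar>f (om(k:=y))\<bar> \<partial>M)"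
      unfolding g_def by (rule integral_abs_bound)
    also have "\<dots> \<le> (\<integral>y. B \<partial>M)"
      by (rule integral_mono) (use Fy_int[OF that] Suc.prems(2) upd_space that in auto)
    finally show ?thesis by (simp add: Mp.prob_space)
  qed
  have g_diff: "\<bar>g (om(j:=y')) - g om\<bar> \<le> c" if "om \<in> space P'" "j < k" "y' \<in> space M" for om j y'
  proof -
    have om': "om(j:=y') \<in> space P'" using that unfolding P'_def by (auto simp: space_PiM PiE_def extensional_def)
    have "g (om(j:=y')) - g om = (\<integral>y. f ((om(j:=y'))(k:=y)) - f (om(k:=y)) \<partial>M)"
      unfolding g_def using Fy_int[OF om'] Fy_int[OF that(1)] by simp
    also have "\<bar>\<dots>\<bar> \<le> (\<integral>y. \<bar>f ((om(j:=y'))(k:=y)) - f (om(k:=y))\<bar> \<partial>M)"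
      by (rule integral_abs_bound)
    also have "\<dots> \<le> (\<integral>y. c \<partial>M)"
    proof (rule integral_mono)
      show "integrable M (\<lambda>y. \<bar>f ((om(j:=y'))(k:=y)) - f (om(k:=y))\<bar>)"
        using Fy_int[OF om'] Fy_int[OF that(1)] by auto
      fix y assume y: "y \<in> space M"
      have "(om(j:=y'))(k:=y) = (om(k:=y))(j:=y')" using that(2) by (auto simp: fun_upd_twist)
      moreover have "abs (f ((om(k:=y))(j:=y')) - f (om(k:=y))) \<le> c"
        by (rule Suc.prems(3)[OF upd_space[OF that(1) y]]) (use that in auto)
      ultimately show "\<bar>f ((om(j:=y'))(k:=y)) - f (om(k:=y))\<bar> \<le> c"
        by metis
    qed simp
    finally show ?thesis by (simp add: Mp.prob_space)
  qed
  have f_int: "integrable (PiM (insert k {..<k}) (\<lambda>_. M)) f"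
  proof -
    interpret Pp: prob_space "PiM (insert k {..<k}) (\<lambda>_. M)" by (rule prob_space_PiM) (rule M)
    show ?thesis
    by (rule Pp.integrable_const_bound[where B=B]) (use fm Suc.prems(2) in \<open>auto simp: Pins\<close>)
  qed
  have Ef: "(\<integral>om. f om \<partial>PiM {..<Suc k} (\<lambda>_. M)) = (\<integral>om. g om \<partial>P')"
    unfolding Pins g_def P'_def by (rule product_integral_insert) (use f_int in auto)
  have IH: "(\<integral>\<^sup>+om. ennreal (exp (l * (g om - (\<integral>om'. g om' \<partial>P')))) \<partial>P') \<le> ennreal (exp (l\<^sup>2 * real k * c\<^sup>2 / 8))"
    unfolding P'_def
    by (rule Suc.IH[where B=B]) (fact g_meas[unfolded P'_def], fact g_bound[unfolded P'_def], fact g_diff[unfolded P'_def])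
  define E where "E = (\<integral>om'. g om' \<partial>P')"
  have hoeff: "(\<integral>\<^sup>+y. ennreal (exp (l * (f (om(k:=y)) - g om))) \<partial>M) \<le> ennreal (exp (l\<^sup>2 * c\<^sup>2 / 8))"
    if omS: "om \<in> space P'" for om
  proof -
    define F where "F = (\<lambda>y. f (om(k:=y)))"
    define a where "a = (INF y\<in>space M. F y)"
    have lb: "-B \<le> F y" if "y \<in> space M" for y
      using Suc.prems(2)[OF upd_space[OF omS that]] unfolding F_def by linarith
    have bdd: "bdd_below (F ` space M)"
      using lb by (intro bdd_belowI[of _ "-B"]) auto
    have inI: "F y \<in> {a..a+c}" if y: "y \<in> space M" for y
    proof -
      have "a \<le> F y" unfolding a_def using bdd y by (rule cINF_lower)
      have "F y - c \<le> a" unfolding a_def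
      proof (rule cINF_greatest)
        show "space M \<noteq> {}" by (rule Mp.not_empty)
        fix y' assume y': "y' \<in> space M"
        have "abs (f ((om(k:=y'))(k:=y)) - f (om(k:=y'))) \<le> c"
          by (rule Suc.prems(3)[OF upd_space[OF omS y']]) (use y in auto)
        then have "abs (F y - F y') \<le> c" by (simp only: fun_upd_upd F_def)
        then show "F y - c \<le> F y'" by linarith
      qed
      then show ?thesis using \<open>a \<le> F y\<close> by simp
    qed
    interpret ibr: interval_bounded_random_variable M F a "a+c"
    proof unfold_locales
      show "F \<in> borel_measurable M" using Fy_meas[OF omS] unfolding F_def .
      show "AE y in M. F y \<in> {a..a+c}" by (rule AE_I2) (rule inI)
    qed
    have "(\<integral>\<^sup>+y. ennreal (exp (l * (F y - Mp.expectation F))) \<partial>M) \<le> ennreal (exp (l\<^sup>2 * (a + c - a)\<^sup>2 / 8))"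
      by (rule ibr.Hoeffdings_lemma_nn_integral) (rule l)
    then show ?thesis by (simp add: F_def g_def)
  qed
  have "(\<integral>\<^sup>+om. ennreal (exp (l * (f om - (\<integral>om'. f om' \<partial>PiM {..<Suc k} (\<lambda>_. M))))) \<partial>PiM {..<Suc k} (\<lambda>_. M))
      = (\<integral>\<^sup>+om. (\<integral>\<^sup>+y. ennreal (exp (l * (f (om(k:=y)) - E))) \<partial>M) \<partial>P')"
  proof -
    have EE: "(\<integral>om'. f om' \<partial>PiM {..<Suc k} (\<lambda>_. M)) = E" using Ef E_def by simp
    show ?thesis unfolding EE unfolding Pins P'_def
      by (rule product_nn_integral_insert) (use fm in auto)
  qed
  also have "\<dots> = (\<integral>\<^sup>+om. ennreal (exp (l * (g om - E))) * (\<integral>\<^sup>+y. ennreal (exp (l * (f (om(k:=y)) - g om))) \<partial>M) \<partial>P')"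
  proof (rule nn_integral_cong)
    fix om assume omS: "om \<in> space P'"
    have "(\<integral>\<^sup>+y. ennreal (exp (l * (f (om(k:=y)) - E))) \<partial>M)
        = (\<integral>\<^sup>+y. ennreal (exp (l * (g om - E))) * ennreal (exp (l * (f (om(k:=y)) - g om))) \<partial>M)"
    proof (rule nn_integral_cong)
      fix y
      have eq: "l * (f (om(k:=y)) - E) = l * (g om - E) + l * (f (om(k:=y)) - g om)"
        by (simp add: algebra_simps)
      show "ennreal (exp (l * (f (om(k:=y)) - E))) = ennreal (exp (l * (g om - E))) * ennreal (exp (l * (f (om(k:=y)) - g om)))"
        unfolding eq exp_add by (rule ennreal_mult) auto
    qed
    also have "\<dots> = ennreal (exp (l * (g om - E))) * (\<integral>\<^sup>+y. ennreal (exp (l * (f (om(k:=y)) - g om))) \<partial>M)"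
      by (rule nn_integral_cmult) (use Fy_meas[OF omS] in measurable)
    finally show "(\<integral>\<^sup>+y. ennreal (exp (l * (f (om(k:=y)) - E))) \<partial>M) = \<dots>" .
  qed
  also have "\<dots> \<le> (\<integral>\<^sup>+om. ennreal (exp (l * (g om - E))) * ennreal (exp (l\<^sup>2 * c\<^sup>2 / 8)) \<partial>P')"
    by (rule nn_integral_mono) (rule mult_left_mono, rule hoeff, assumption, simp)
  also have "\<dots> = (\<integral>\<^sup>+om. ennreal (exp (l * (g om - E))) \<partial>P') * ennreal (exp (l\<^sup>2 * c\<^sup>2 / 8))"
    by (rule nn_integral_multc) (use g_meas in measurable)
  also have "\<dots> \<le> ennreal (exp (l\<^sup>2 * real k * c\<^sup>2 / 8)) * ennreal (exp (l\<^sup>2 * c\<^sup>2 / 8))"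
    using IH unfolding E_def by (rule mult_right_mono) simp
  also have "\<dots> = ennreal (exp (l\<^sup>2 * real (Suc k) * c\<^sup>2 / 8))"
  proof -
    have eqS: "l\<^sup>2 * real (Suc k) * c\<^sup>2 / 8 = l\<^sup>2 * real k * c\<^sup>2 / 8 + l\<^sup>2 * c\<^sup>2 / 8"
      by (simp add: field_simps)
    show ?thesis unfolding eqS exp_add by (rule ennreal_mult[symmetric]) auto
  qed
  finally show ?case .
qed


lemma mcdiarmid_tail:
  fixes M :: "'a measure" and f :: "(nat \<Rightarrow> 'a) \<Rightarrow> real"
  assumes M: "prob_space M" and c: "c > 0" and t: "t > 0" and m: "m \<ge> 1"
    and fm: "f \<in> borel_measurable (PiM {..<m} (\<lambda>_. M))"
    and fB: "\<And>om. om \<in> space (PiM {..<m} (\<lambda>_. M)) \<Longrightarrow> \<bar>f om\<bar> \<le> B"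
    and fd: "\<And>om j y. om \<in> space (PiM {..<m} (\<lambda>_. M)) \<Longrightarrow> j < m \<Longrightarrow> y \<in> space M \<Longrightarrow> abs (f (om(j:=y)) - f om) \<le> c"
  shows "measure (PiM {..<m} (\<lambda>_. M)) {om \<in> space (PiM {..<m} (\<lambda>_. M)). f om - (\<integral>om'. f om' \<partial>PiM {..<m} (\<lambda>_. M)) \<ge> t}
     \<le> exp (- 2 * t\<^sup>2 / (real m * c\<^sup>2))"
proof -
  let ?P = "PiM {..<m} (\<lambda>_. M)"
  interpret P: prob_space ?P by (rule prob_space_PiM) (rule M)
  define E where "E = (\<integral>om'. f om' \<partial>?P)"
  define d where "d = real m * c\<^sup>2"
  have d: "d > 0" using c m by (simp add: d_def)
  define l where "l = 4 * t / d"
  have l: "l > 0" using t d by (simp add: l_def)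
  have A: "emeasure ?P {om \<in> space ?P. f om - E \<ge> t} \<le> ennreal (exp (-l * t)) * (\<integral>\<^sup>+om. ennreal (exp (l * (f om - E))) * indicator (space ?P) om \<partial>?P)"
    by (rule Chernoff_ineq_nn_integral_ge[OF l]) (use fm in auto)
  have I_eq: "(\<integral>\<^sup>+om. ennreal (exp (l * (f om - E))) * indicator (space ?P) om \<partial>?P) = (\<integral>\<^sup>+om. ennreal (exp (l * (f om - E))) \<partial>?P)"
    by (rule nn_integral_cong) simp
  have I_le: "(\<integral>\<^sup>+om. ennreal (exp (l * (f om - E))) \<partial>?P) \<le> ennreal (exp (l\<^sup>2 * real m * c\<^sup>2 / 8))"
    unfolding E_def by (rule mcdiarmid_mgf[OF M l _ fm fB fd]) (use c in auto)
  have "emeasure ?P {om \<in> space ?P. f om - E \<ge> t} \<le> ennreal (exp (-l * t)) * ennreal (exp (l\<^sup>2 * real m * c\<^sup>2 / 8))"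
    using order.trans[OF A mult_left_mono[OF I_le[folded I_eq]]] by simp
  also have "ennreal (exp (-l * t)) * ennreal (exp (l\<^sup>2 * real m * c\<^sup>2 / 8)) = ennreal (exp (-l * t + l\<^sup>2 * real m * c\<^sup>2 / 8))"
    unfolding exp_add by (rule ennreal_mult[symmetric]) auto
  also have "-l * t + l\<^sup>2 * real m * c\<^sup>2 / 8 = - 2 * t\<^sup>2 / (real m * c\<^sup>2)"
    using d unfolding l_def d_def by (simp add: field_simps power2_eq_square)
  finally have "emeasure ?P {om \<in> space ?P. f om - E \<ge> t} \<le> ennreal (exp (- 2 * t\<^sup>2 / (real m * c\<^sup>2)))" .
  then show ?thesis unfolding E_def by (simp add: P.emeasure_eq_measure ennreal_le_iff)
qed

lemma sum_sq_integral:
  fixes M :: "'a measure" and Y :: "'a \<Rightarrow> real"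
  assumes M: "prob_space M" and Ym[measurable]: "Y \<in> borel_measurable M"
    and YB: "\<And>y. y \<in> space M \<Longrightarrow> \<bar>Y y\<bar> \<le> B" and Y0: "(\<integral>y. Y y \<partial>M) = 0"
  shows "(\<integral>om. (\<Sum>j<m. Y (om j))\<^sup>2 \<partial>PiM {..<m} (\<lambda>_. M)) = real m * (\<integral>y. (Y y)\<^sup>2 \<partial>M)"
proof (induction m)
  case 0
  show ?case by (simp add: PiM_empty lebesgue_integral_count_space_finite)
next
  case (Suc k)
  interpret Mp: prob_space M by (rule M)
  interpret product_sigma_finite "\<lambda>_. M"
    by (simp add: product_sigma_finite_def Mp.sigma_finite_measure_axioms)
  define P' where "P' = PiM {..<k} (\<lambda>_. M)"
  interpret P': prob_space P' unfolding P'_def by (rule prob_space_PiM) (rule M)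
  have Pins: "PiM {..<Suc k} (\<lambda>_. M) = PiM (insert k {..<k}) (\<lambda>_. M)"
    by (simp add: lessThan_Suc)
  interpret Pp: prob_space "PiM (insert k {..<k}) (\<lambda>_. M)" by (rule prob_space_PiM) (rule M)
  have B0: "0 \<le> B" using YB[of "SOME y. y \<in> space M"] Mp.not_empty some_in_eq by fastforce
  have sumB: "\<bar>\<Sum>j\<in>J. Y (om j)\<bar> \<le> real (card J) * B" if "om \<in> space (PiM J (\<lambda>_. M))" for J om
  proof -
    have "\<bar>\<Sum>j\<in>J. Y (om j)\<bar> \<le> (\<Sum>j\<in>J. \<bar>Y (om j)\<bar>)" by (rule sum_abs)
    also have "\<dots> \<le> (\<Sum>j\<in>J. B)" by (rule sum_mono) (use that in \<open>auto intro!: YB simp: space_PiM\<close>)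
    finally show ?thesis by simp
  qed
  have int: "integrable (PiM (insert k {..<k}) (\<lambda>_. M)) (\<lambda>om. (\<Sum>j<Suc k. Y (om j))\<^sup>2)"
  proof (rule Pp.integrable_const_bound[where B="(real (Suc k) * B)\<^sup>2"])
    show "AE om in PiM (insert k {..<k}) (\<lambda>_. M). norm ((\<Sum>j<Suc k. Y (om j))\<^sup>2) \<le> (real (Suc k) * B)\<^sup>2"
    proof (rule AE_I2)
      fix om assume om: "om \<in> space (PiM (insert k {..<k}) (\<lambda>_. M))"
      have "\<bar>\<Sum>j<Suc k. Y (om j)\<bar> \<le> real (Suc k) * B"
        using sumB[of om "{..<Suc k}"] om by (simp add: lessThan_Suc)
      then show "norm ((\<Sum>j<Suc k. Y (om j))\<^sup>2) \<le> (real (Suc k) * B)\<^sup>2"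
        by (simp add: abs_le_square_iff[symmetric] power_abs)
    qed
  qed (measurable, auto)
  have Yint: "integrable M Y" by (rule Mp.integrable_const_bound[where B=B]) (use YB in auto)
  have Y2int: "integrable M (\<lambda>y. (Y y)\<^sup>2)"
    by (rule Mp.integrable_const_bound[where B="B\<^sup>2"])
       (use YB B0 in \<open>auto intro!: AE_I2 simp: abs_le_square_iff[symmetric] power_abs\<close>)
  have S2int: "integrable P' (\<lambda>om. (\<Sum>j<k. Y (om j))\<^sup>2)"
  proof (rule P'.integrable_const_bound[where B="(real k * B)\<^sup>2"])
    show "AE om in P'. norm ((\<Sum>j<k. Y (om j))\<^sup>2) \<le> (real k * B)\<^sup>2"
    proof (rule AE_I2)
      fix om assume om: "om \<in> space P'"
      have "\<bar>\<Sum>j<k. Y (om j)\<bar> \<le> real k * B"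
        using sumB[of om "{..<k}"] om by (simp add: P'_def)
      then show "norm ((\<Sum>j<k. Y (om j))\<^sup>2) \<le> (real k * B)\<^sup>2"
        by (simp add: abs_le_square_iff[symmetric] power_abs)
    qed
  qed (simp add: P'_def)
  have "(\<integral>om. (\<Sum>j<Suc k. Y (om j))\<^sup>2 \<partial>PiM {..<Suc k} (\<lambda>_. M))
      = (\<integral>om. (\<integral>y. (\<Sum>j<Suc k. Y ((om(k:=y)) j))\<^sup>2 \<partial>M) \<partial>P')"
    unfolding Pins P'_def by (rule product_integral_insert) (use int in auto)
  also have "\<dots> = (\<integral>om. (\<Sum>j<k. Y (om j))\<^sup>2 + (\<integral>y. (Y y)\<^sup>2 \<partial>M) \<partial>P')"
  proof (rule Bochner_Integration.integral_cong[OF refl])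
    fix om
    define S where "S = (\<Sum>j<k. Y (om j))"
    have "(\<Sum>j<Suc k. Y ((om(k:=y)) j)) = S + Y y" for y
      unfolding S_def by (simp add: lessThan_Suc)
    then have "(\<integral>y. (\<Sum>j<Suc k. Y ((om(k:=y)) j))\<^sup>2 \<partial>M) = (\<integral>y. S\<^sup>2 + 2 * S * Y y + (Y y)\<^sup>2 \<partial>M)"
      by (simp add: power2_sum algebra_simps)
    also have "\<dots> = S\<^sup>2 + 2 * S * (\<integral>y. Y y \<partial>M) + (\<integral>y. (Y y)\<^sup>2 \<partial>M)"
      using Yint Y2int by (simp add: Mp.prob_space)
    finally show "(\<integral>y. (\<Sum>j<Suc k. Y ((om(k:=y)) j))\<^sup>2 \<partial>M) = (\<Sum>j<k. Y (om j))\<^sup>2 + (\<integral>y. (Y y)\<^sup>2 \<partial>M)"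
      unfolding S_def Y0 by simp
  qed
  also have "\<dots> = (\<integral>om. (\<Sum>j<k. Y (om j))\<^sup>2 \<partial>P') + (\<integral>y. (Y y)\<^sup>2 \<partial>M)"
    using S2int by (simp add: P'.prob_space)
  also have "\<dots> = real (Suc k) * (\<integral>y. (Y y)\<^sup>2 \<partial>M)"
    using Suc.IH unfolding P'_def by (simp add: algebra_simps)
  finally show ?case .
qed




lemma unif_eq: "uniform_measure lborel {0..2*pi} = density lborel (\<lambda>b. ennreal (indicator {0..2*pi} b / (2*pi)))"
  unfolding uniform_measure_def
  by (rule density_cong) (auto simp: ennreal_indicator[symmetric] divide_ennreal indicator_def)

lemma prob_unif: "prob_space (uniform_measure lborel {0..2*pi::real})"
  by (rule prob_space_uniform_measure) auto

lemma cos_prod_int: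
  fixes \<alpha> \<beta> C :: real
  shows "(\<integral>b. 2 * C * cos (\<alpha> + b) * cos (\<beta> + b) \<partial>uniform_measure lborel {0..2*pi}) = C * cos (\<alpha> - \<beta>)"
proof -
  define \<phi> where "\<phi> b = 2 * C * cos (\<alpha> + b) * cos (\<beta> + b)" for b
  define G where "G b = C * cos (\<alpha> - \<beta>) * b + C * sin (\<alpha> + \<beta> + 2 * b) / 2" for b
  have phi_eq: "\<phi> b = C * cos (\<alpha> - \<beta>) + C * cos (\<alpha> + \<beta> + 2 * b)" for b
  proof -
    have "cos (\<alpha> + b) * cos (\<beta> + b) = (cos ((\<alpha> + b) - (\<beta> + b)) + cos ((\<alpha> + b) + (\<beta> + b))) / 2"
      by (rule cos_times_cos)
    moreover have "(\<alpha> + b) - (\<beta> + b) = \<alpha> - \<beta>" "(\<alpha> + b) + (\<beta> + b) = \<alpha> + \<beta> + 2 * b" by simp_all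
    ultimately show ?thesis unfolding \<phi>_def by (simp add: algebra_simps)
  qed
  have cont: "continuous_on {0..2*pi} \<phi>"
    unfolding \<phi>_def by (intro continuous_intros)
  have deriv: "(G has_vector_derivative \<phi> b) (at b within {0..2*pi})" for b
  proof -
    have "(G has_real_derivative (C * cos (\<alpha> - \<beta>) + C * (cos (\<alpha> + \<beta> + 2 * b) * 2) / 2)) (at b within {0..2*pi})"
      unfolding G_def by (auto intro!: derivative_eq_intros)
    then show ?thesis
      by (simp add: has_real_derivative_iff_has_vector_derivative[symmetric] phi_eq)
  qed
  have FTC: "(\<integral>b. indicator {0..2*pi} b *\<^sub>R \<phi> b \<partial>lborel) = G (2*pi) - G 0"
    by (rule integral_FTC_atLeastAtMost) (use deriv cont in auto)
  have sin4: "sin (\<alpha> + \<beta> + 2 * (2 * pi)) = sin (\<alpha> + \<beta>)"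
  proof -
    have "\<alpha> + \<beta> + 2 * (2 * pi) = (\<alpha> + \<beta> + 2 * pi) + 2 * pi" by simp
    then show ?thesis by (simp only: sin_periodic)
  qed
  have G: "G (2*pi) - G 0 = 2 * pi * (C * cos (\<alpha> - \<beta>))"
    unfolding G_def sin4 by (simp add: algebra_simps)
  have "(\<integral>b. \<phi> b \<partial>uniform_measure lborel {0..2*pi}) = (\<integral>b. (indicator {0..2*pi} b / (2*pi)) *\<^sub>R \<phi> b \<partial>lborel)"
    unfolding unif_eq
    by (rule integral_density) (auto simp: \<phi>_def)
  also have "\<dots> = (\<integral>b. indicator {0..2*pi} b *\<^sub>R \<phi> b \<partial>lborel) / (2*pi)"
    by (simp add: divide_simps)
  also have "\<dots> = C * cos (\<alpha> - \<beta>)" unfolding FTC G by simp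
  finally show ?thesis unfolding \<phi>_def .
qed

context
  fixes p :: "real^'d \<Rightarrow> real"
  assumes pn: "\<And>w. p w \<ge> 0" and pint: "integrable lborel p" and cp: "ck p > 0"
begin

lemma p_meas[measurable]: "p \<in> borel_measurable lborel"
  using pint by auto

lemma prob_D: "prob_space (density lborel (\<lambda>w. ennreal (p w / ck p)))"
proof (rule prob_spaceI)
  have "emeasure (density lborel (\<lambda>w. ennreal (p w / ck p))) (space (density lborel (\<lambda>w. ennreal (p w / ck p))))
      = (\<integral>\<^sup>+w. ennreal (p w / ck p) \<partial>lborel)"
    by (subst emeasure_density) auto
  also have "\<dots> = ennreal (\<integral>w. p w / ck p \<partial>lborel)"
    by (rule nn_integral_eq_integral) (use pint pn cp in auto)
  also have "\<dots> = 1" using cp by (simp add: ck_def)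
  finally show "emeasure (density lborel (\<lambda>w. ennreal (p w / ck p))) (space (density lborel (\<lambda>w. ennreal (p w / ck p)))) = 1" .
qed

lemma prob_F: "prob_space (feature_dist p)"
  unfolding feature_dist_def by (rule prob_space_pair[OF prob_D prob_unif])

lemma space_F: "space (feature_dist p) = UNIV"
  unfolding feature_dist_def by (simp add: space_pair_measure)

lemma rf_meas: "(\<lambda>v. rf_g c (fst v) (snd v) z x) \<in> borel_measurable (feature_dist p)"
  unfolding rf_g_def feature_dist_def by measurable

lemma rf_bound: "\<bar>rf_g (ck p) w b z x\<bar> \<le> 2 * ck p"
proof -
  have "\<bar>cos (w \<bullet> z + b) * cos (w \<bullet> x + b)\<bar> \<le> 1"
    by (simp add: abs_mult mult_le_one)
  then show ?thesis using cp unfolding rf_g_def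
    by (simp add: abs_mult mult.assoc mult_le_cancel_left1)
qed

lemma int_rf: "(\<integral>v. rf_g (ck p) (fst v) (snd v) z x \<partial>feature_dist p) = bochner_kernel p z x"
proof -
  let ?D = "density lborel (\<lambda>w. ennreal (p w / ck p))"
  let ?U = "uniform_measure lborel {0..2*pi::real}"
  interpret D: prob_space ?D by (rule prob_D)
  interpret U: prob_space ?U by (rule prob_unif)
  interpret DU: pair_sigma_finite ?D ?U ..
  interpret F: prob_space "feature_dist p" by (rule prob_F)
  have int: "integrable (?D \<Otimes>\<^sub>M ?U) (\<lambda>v. rf_g (ck p) (fst v) (snd v) z x)"
    unfolding feature_dist_def[symmetric]
    by (rule F.integrable_const_bound[where B="2 * ck p"]) (use rf_meas in \<open>auto intro: rf_bound\<close>)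
  have "(\<integral>v. rf_g (ck p) (fst v) (snd v) z x \<partial>feature_dist p)
      = (\<integral>w. (\<integral>b. rf_g (ck p) w b z x \<partial>?U) \<partial>?D)"
    unfolding feature_dist_def using DU.integral_fst'[OF int] by simp
  also have "\<dots> = (\<integral>w. ck p * cos (w \<bullet> z - w \<bullet> x) \<partial>?D)"
    unfolding rf_g_def by (simp only: cos_prod_int)
  also have "\<dots> = (\<integral>w. (p w / ck p) *\<^sub>R (ck p * cos (w \<bullet> z - w \<bullet> x)) \<partial>lborel)"
    by (rule integral_density) (use pn cp in auto)
  also have "\<dots> = (\<integral>w. p w * cos (w \<bullet> (z - x)) \<partial>lborel)"
    by (rule Bochner_Integration.integral_cong[OF refl]) (use cp in \<open>auto simp: inner_diff_right\<close>)
  finally show ?thesis unfolding bochner_kernel_def .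
qed

lemma kernel_bound: "\<bar>bochner_kernel p z x\<bar> \<le> ck p"
proof -
  have pc: "p w * \<bar>cos t\<bar> \<le> p w" for w t
    using pn[of w] abs_cos_le_one[of t] by (simp add: mult_left_le)
  have "\<bar>bochner_kernel p z x\<bar> \<le> (\<integral>w. \<bar>p w * cos (w \<bullet> (z - x))\<bar> \<partial>lborel)"
    unfolding bochner_kernel_def by (rule integral_abs_bound)
  also have "\<dots> \<le> (\<integral>w. p w \<partial>lborel)"
  proof (rule integral_mono)
    show "integrable lborel (\<lambda>w. \<bar>p w * cos (w \<bullet> (z - x))\<bar>)"
      by (rule Bochner_Integration.integrable_bound[OF pint]) (auto simp: abs_mult pn pc)
    show "integrable lborel p" by (rule pint)
    fix w show "\<bar>p w * cos (w \<bullet> (z - x))\<bar> \<le> p w"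
      by (simp add: abs_mult pn pc)
  qed
  finally show ?thesis by (simp add: ck_def)
qed

end




lemma quad_cs:
  fixes a b c :: real
  assumes H: "\<And>t. 0 \<le> a - 2*t*c + t\<^sup>2*b" and b: "0 \<le> b"
  shows "c\<^sup>2 \<le> a*b"
proof -
  have a: "0 \<le> a" using H[of 0] by simp
  show ?thesis
  proof (cases "b = 0")
    case True
    show ?thesis
    proof (cases "c = 0")
      case False
      have h: "0 \<le> a - 2*((a+1)/(2*c))*c + ((a+1)/(2*c))\<^sup>2*b" by (rule H)
      have "2*((a+1)/(2*c))*c = a+1" using False by simp
      with h True have False by simp
      then show ?thesis ..
    qed (use a b in simp)
  next
    case False
    with b have b': "b > 0" by simp
    have h: "0 \<le> a - 2*(c/b)*c + (c/b)\<^sup>2*b" by (rule H)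
    have e1: "2*(c/b)*c = 2*(c\<^sup>2/b)" by (simp add: power2_eq_square)
    have e2: "(c/b)\<^sup>2*b = c\<^sup>2/b" using b' by (simp add: power2_eq_square)
    have "c\<^sup>2/b \<le> a" using h unfolding e1 e2 by linarith
    then show ?thesis using b' by (simp add: pos_divide_le_eq mult.commute)
  qed
qed

context
  fixes Q :: "'a measure"
  assumes Q: "prob_space Q"
begin

interpretation Qp: prob_space Q by (rule Q)

lemma L2_nonneg: "L2_norm Q u \<ge> 0"
  unfolding L2_norm_def by simp

lemma int_bdd:
  fixes u :: "'a \<Rightarrow> real"
  assumes "u \<in> borel_measurable Q" "\<And>x. x \<in> space Q \<Longrightarrow> \<bar>u x\<bar> \<le> B"
  shows "integrable Q u"
  by (rule Qp.integrable_const_bound[where B=B]) (use assms in \<open>auto intro!: AE_I2\<close>)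

lemma L2_bound:
  assumes um: "u \<in> borel_measurable Q" and uB: "\<And>x. x \<in> space Q \<Longrightarrow> \<bar>u x\<bar> \<le> B"
  shows "L2_norm Q u \<le> B"
proof -
  obtain x0 where "x0 \<in> space Q" using Qp.not_empty by blast
  then have B0: "0 \<le> B" using uB[of x0] by linarith
  have sq: "(u x)\<^sup>2 \<le> B\<^sup>2" if "x \<in> space Q" for x
    using uB[OF that] B0 by (simp add: abs_le_square_iff[symmetric])
  have "(\<integral>x. (u x)\<^sup>2 \<partial>Q) \<le> (\<integral>x. B\<^sup>2 \<partial>Q)"
  proof (rule integral_mono)
    show "integrable Q (\<lambda>x. (u x)\<^sup>2)"
      by (rule int_bdd[where B="B\<^sup>2"]) (use um in measurable, use sq in simp)
  qed (use sq in simp_all)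
  then have "(\<integral>x. (u x)\<^sup>2 \<partial>Q) \<le> B\<^sup>2" by (simp add: Qp.prob_space)
  then have "L2_norm Q u \<le> sqrt (B\<^sup>2)" unfolding L2_norm_def by (rule real_sqrt_le_mono)
  then show ?thesis using B0 by simp
qed

lemma L2_tri:
  assumes um: "u \<in> borel_measurable Q" and uB: "\<And>x. x \<in> space Q \<Longrightarrow> \<bar>u x\<bar> \<le> Bu"
    and vm: "v \<in> borel_measurable Q" and vB: "\<And>x. x \<in> space Q \<Longrightarrow> \<bar>v x\<bar> \<le> Bv"
  shows "L2_norm Q (\<lambda>x. u x + v x) \<le> L2_norm Q u + L2_norm Q v"
proof -
  have uBB: "\<bar>(u x)\<^sup>2\<bar> \<le> Bu\<^sup>2" if "x \<in> space Q" for x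
    using uB[OF that] by (simp add: abs_le_square_iff[symmetric] power_abs)
  have vBB: "\<bar>(v x)\<^sup>2\<bar> \<le> Bv\<^sup>2" if "x \<in> space Q" for x
    using vB[OF that] by (simp add: abs_le_square_iff[symmetric] power_abs)
  have uvB: "\<bar>u x * v x\<bar> \<le> Bu * Bv" if "x \<in> space Q" for x
    using uB[OF that] vB[OF that] by (simp add: abs_mult mult_mono')
  have iu: "integrable Q (\<lambda>x. (u x)\<^sup>2)" by (rule int_bdd[OF _ uBB]) (use um in measurable)
  have iv: "integrable Q (\<lambda>x. (v x)\<^sup>2)" by (rule int_bdd[OF _ vBB]) (use vm in measurable)
  have iuv: "integrable Q (\<lambda>x. u x * v x)" by (rule int_bdd[OF _ uvB]) (use um vm in measurable)
  define a where "a = (\<integral>x. (u x)\<^sup>2 \<partial>Q)"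
  define b where "b = (\<integral>x. (v x)\<^sup>2 \<partial>Q)"
  define c where "c = (\<integral>x. u x * v x \<partial>Q)"
  have a: "a \<ge> 0" unfolding a_def by simp
  have b: "b \<ge> 0" unfolding b_def by simp
  have quad: "0 \<le> a - 2*t*c + t\<^sup>2*b" for t
  proof -
    have "0 \<le> (\<integral>x. (u x - t * v x)\<^sup>2 \<partial>Q)" by simp
    also have "(\<integral>x. (u x - t * v x)\<^sup>2 \<partial>Q) = (\<integral>x. (u x)\<^sup>2 - 2 * t * (u x * v x) + t\<^sup>2 * (v x)\<^sup>2 \<partial>Q)"
      by (simp add: power2_diff power_mult_distrib algebra_simps)
    also have "\<dots> = a - 2*t*c + t\<^sup>2*b"
      using iu iv iuv unfolding a_def b_def c_def by simp
    finally show ?thesis .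
  qed
  have "c\<^sup>2 \<le> a * b" by (rule quad_cs[OF quad b])
  then have "sqrt (c\<^sup>2) \<le> sqrt (a * b)" by (rule real_sqrt_le_mono)
  then have "\<bar>c\<bar> \<le> sqrt a * sqrt b" by (simp add: real_sqrt_mult)
  then have "c \<le> sqrt a * sqrt b" by linarith
  then have "(\<integral>x. (u x + v x)\<^sup>2 \<partial>Q) \<le> (sqrt a + sqrt b)\<^sup>2"
  proof -
    assume cs: "c \<le> sqrt a * sqrt b"
    have "(\<integral>x. (u x + v x)\<^sup>2 \<partial>Q) = (\<integral>x. (u x)\<^sup>2 + 2 * (u x * v x) + (v x)\<^sup>2 \<partial>Q)"
      by (simp add: power2_sum algebra_simps)
    also have "\<dots> = a + 2 * c + b" using iu iv iuv unfolding a_def b_def c_def by simp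
    also have "\<dots> \<le> (sqrt a + sqrt b)\<^sup>2"
    proof -
      have "(sqrt a + sqrt b)\<^sup>2 = a + 2*(sqrt a * sqrt b) + b" using a b by (simp add: power2_sum)
      then show ?thesis using cs by linarith
    qed
    finally show ?thesis .
  qed
  then have "L2_norm Q (\<lambda>x. u x + v x) \<le> sqrt ((sqrt a + sqrt b)\<^sup>2)"
    unfolding L2_norm_def by (rule real_sqrt_le_mono)
  also have "\<dots> = sqrt a + sqrt b" using a b by simp
  finally show ?thesis unfolding L2_norm_def a_def b_def .
qed

lemma L2_diff:
  assumes um: "u \<in> borel_measurable Q" and uB: "\<And>x. x \<in> space Q \<Longrightarrow> \<bar>u x\<bar> \<le> Bu"
    and vm: "v \<in> borel_measurable Q" and vB: "\<And>x. x \<in> space Q \<Longrightarrow> \<bar>v x\<bar> \<le> Bv"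
  shows "\<bar>L2_norm Q u - L2_norm Q v\<bar> \<le> L2_norm Q (\<lambda>x. u x - v x)"
proof -
  have dB: "\<bar>u x - v x\<bar> \<le> Bu + Bv" if "x \<in> space Q" for x
    using uB[OF that] vB[OF that] abs_triangle_ineq4[of "u x" "v x"] by linarith
  have dB': "\<bar>v x - u x\<bar> \<le> Bu + Bv" if "x \<in> space Q" for x
    using uB[OF that] vB[OF that] abs_triangle_ineq4[of "v x" "u x"] by linarith
  have e1: "(\<lambda>x. v x + (u x - v x)) = u" by auto
  have e2: "(\<lambda>x. u x + (v x - u x)) = v" by auto
  have 1: "L2_norm Q u \<le> L2_norm Q v + L2_norm Q (\<lambda>x. u x - v x)"
    using L2_tri[OF vm vB borel_measurable_diff[OF um vm] dB] unfolding e1 .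
  have 2: "L2_norm Q v \<le> L2_norm Q u + L2_norm Q (\<lambda>x. v x - u x)"
    using L2_tri[OF um uB borel_measurable_diff[OF vm um] dB'] unfolding e2 .
  have e3: "(\<lambda>x. (v x - u x)\<^sup>2) = (\<lambda>x. (u x - v x)\<^sup>2)" by (rule ext) (rule power2_commute)
  have 3: "L2_norm Q (\<lambda>x. v x - u x) = L2_norm Q (\<lambda>x. u x - v x)"
    unfolding L2_norm_def e3 ..
  show ?thesis using 1 2 3 by linarith
qed

end




lemma avg_bound:
  fixes a :: "nat \<Rightarrow> real"
  assumes N: "N \<ge> 1" and aB: "\<And>i. i < N \<Longrightarrow> \<bar>a i\<bar> \<le> B"
  shows "\<bar>(1 / real N) * (\<Sum>i<N. a i)\<bar> \<le> B"
proof -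
  have "\<bar>\<Sum>i<N. a i\<bar> \<le> (\<Sum>i<N. \<bar>a i\<bar>)" by (rule sum_abs)
  also have "\<dots> \<le> (\<Sum>i<N. B)" by (rule sum_mono) (use aB in auto)
  finally have "\<bar>\<Sum>i<N. a i\<bar> \<le> real N * B" by simp
  then show ?thesis using N by (simp add: abs_mult field_simps)
qed

lemma sum_upd_diff:
  fixes g :: "'a \<Rightarrow> real" and j m :: nat
  assumes "j < m"
  shows "(\<Sum>j'<m. g ((om(j:=y)) j')) - (\<Sum>j'<m. g (om j')) = g y - g (om j)"
proof -
  have "(\<Sum>j'<m. g ((om(j:=y)) j')) = g ((om(j:=y)) j) + (\<Sum>j'\<in>{..<m}-{j}. g ((om(j:=y)) j'))"
    by (rule sum.remove) (use assms in auto)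
  moreover have "(\<Sum>j'<m. g (om j')) = g (om j) + (\<Sum>j'\<in>{..<m}-{j}. g (om j'))"
    by (rule sum.remove) (use assms in auto)
  moreover have "(\<Sum>j'\<in>{..<m}-{j}. g ((om(j:=y)) j')) = (\<Sum>j'\<in>{..<m}-{j}. g (om j'))"
    by (rule sum.cong) auto
  ultimately show ?thesis by simp
qed

theorem lemma6p2:
  fixes p :: "real^'d \<Rightarrow> real" and zs :: "nat \<Rightarrow> real^'d"
    and Q :: "(real^'d) measure" and m n :: nat and \<delta> :: real
  defines "k \<equiv> bochner_kernel p"
  assumes p_nonneg: "\<And>w. p w \<ge> 0"
    and p_int: "integrable lborel p"
    and ck_pos: "ck p > 0"
    and k_cont: "continuous_on UNIV (\<lambda>(z, z'). k z z')"
    and k_bound: "\<And>z. k z z \<le> 1"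
    and Q: "prob_space Q" "sets Q = sets borel"
    and m: "m \<ge> 1" and n: "n \<ge> 1"
    and \<delta>: "0 < \<delta>" "\<delta> < 1"
  shows "measure (PiM {..<m} (\<lambda>_. feature_dist p))
           {\<omega> \<in> space (PiM {..<m} (\<lambda>_. feature_dist p)).
              L2_norm Q (\<lambda>x. kme k n zs x - (1 / real n) * (\<Sum>i<n. ghat (ck p) m \<omega> (zs i) x))
                \<le> 2 * ck p / sqrt (real m) * (1 + sqrt (2 * ln (real n / \<delta>)))}
         \<ge> 1 - \<delta>"
proof -
  define C where "C = ck p"
  have C: "C > 0" using ck_pos by (simp add: C_def)
  define F where "F = feature_dist p"
  define P where "P = PiM {..<m} (\<lambda>_. F)"
  interpret Fp: prob_space F unfolding F_def by (rule prob_F[OF p_nonneg p_int ck_pos])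
  interpret Pp: prob_space P unfolding P_def by (rule prob_space_PiM) (rule Fp.prob_space_axioms)
  interpret Qp: prob_space Q by (rule Q(1))
  interpret PQ: pair_sigma_finite P Q ..
  have spF: "space F = UNIV" unfolding F_def by (rule space_F[OF p_nonneg p_int ck_pos])
  define K where "K x = kme k n zs x" for x
  define h where "h v x = (1 / real n) * (\<Sum>i<n. rf_g C (fst v) (snd v) (zs i) x)" for v x
  define Y where "Y x v = K x - h v x" for x v
  define X where "X om x = (1 / real m) * (\<Sum>j<m. Y x (om j))" for om x
  define f where "f om = L2_norm Q (X om)" for om
  define L where "L = ln (real n / \<delta>)"
  have L: "L > 0" unfolding L_def using n \<delta> by (simp add: ln_gt_zero_iff field_simps)

  have X_eq: "(\<lambda>x. kme k n zs x - (1 / real n) * (\<Sum>i<n. ghat (ck p) m om (zs i) x)) = X om" for om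
  proof
    fix x
    define r where "r i j = rf_g C (fst (om j)) (snd (om j)) (zs i) x" for i j
    have 1: "(\<Sum>i<n. ghat (ck p) m om (zs i) x) = (1 / real m) * (\<Sum>i<n. \<Sum>j<m. r i j)"
      unfolding ghat_def r_def C_def by (simp add: sum_distrib_left)
    have 2: "(\<Sum>j<m. Y x (om j)) = real m * K x - (1 / real n) * (\<Sum>j<m. \<Sum>i<n. r i j)"
      unfolding Y_def h_def r_def by (simp add: sum_subtractf sum_distrib_left)
    have 3: "(\<Sum>i<n. \<Sum>j<m. r i j) = (\<Sum>j<m. \<Sum>i<n. r i j)" by (rule sum.swap)
    show "kme k n zs x - (1 / real n) * (\<Sum>i<n. ghat (ck p) m om (zs i) x) = X om x"
      unfolding X_def 2 1 3 K_def[symmetric] using m by (simp add: field_simps)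
  qed

  have kb: "\<bar>k z x\<bar> \<le> C" for z x
    unfolding k_def C_def by (rule kernel_bound[OF p_nonneg p_int ck_pos])
  have Kb: "\<bar>K x\<bar> \<le> C" for x
    unfolding K_def kme_def by (rule avg_bound[OF n]) (rule kb)
  have rb: "\<bar>rf_g C w b z x\<bar> \<le> 2 * C" for w b z x
    unfolding C_def by (rule rf_bound[OF p_nonneg p_int ck_pos])
  have hb: "\<bar>h v x\<bar> \<le> 2 * C" for v x
    unfolding h_def by (rule avg_bound[OF n]) (rule rb)
  have Yb: "\<bar>Y x v\<bar> \<le> 3 * C" for x v
    using Kb[of x] hb[of v x] unfolding Y_def by linarith
  have Xb: "\<bar>X om x\<bar> \<le> 3 * C" for om x
    unfolding X_def by (rule avg_bound[OF m]) (rule Yb)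
  have Xsq: "(X om x)\<^sup>2 \<le> 9 * C\<^sup>2" for om x
  proof -
    have "\<bar>X om x\<bar>\<^sup>2 \<le> (3 * C)\<^sup>2" by (rule power_mono[OF Xb]) simp
    then show ?thesis by (simp add: power_mult_distrib)
  qed

  have kc: "continuous_on UNIV (\<lambda>x. k z x)" for z
  proof -
    have "continuous_on UNIV (\<lambda>x. (\<lambda>(z, z'). k z z') (z, x))"
      by (rule continuous_on_compose2[OF k_cont]) (auto intro!: continuous_intros)
    then show ?thesis by simp
  qed
  have km[measurable]: "(\<lambda>x. k z x) \<in> borel_measurable borel" for z
    by (rule borel_measurable_continuous_onI[OF kc])
  have Xm_borel: "(\<lambda>(om, x). X om x) \<in> borel_measurable (P \<Otimes>\<^sub>M borel)"
    unfolding X_def Y_def h_def K_def kme_def rf_g_def P_def F_def feature_dist_def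
    by measurable
  have sPQ: "sets (P \<Otimes>\<^sub>M Q) = sets (P \<Otimes>\<^sub>M borel)"
    by (rule sets_pair_measure_cong[OF refl Q(2)])
  have Xm: "(\<lambda>(om, x). X om x) \<in> borel_measurable (P \<Otimes>\<^sub>M Q)"
    using Xm_borel by (simp add: measurable_cong_sets[OF sPQ refl])
  have X2m: "(\<lambda>(om, x). (X om x)\<^sup>2) \<in> borel_measurable (P \<Otimes>\<^sub>M Q)"
    using Xm by measurable
  have Xom_borel: "X om \<in> borel_measurable borel" for om
    unfolding X_def Y_def h_def K_def kme_def rf_g_def by measurable
  have Xom: "X om \<in> borel_measurable Q" for om
    using Xom_borel[of om] by (simp add: measurable_cong_sets[OF Q(2) refl])
  have intm: "(\<lambda>om. \<integral>x. (X om x)\<^sup>2 \<partial>Q) \<in> borel_measurable P"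
    using Qp.borel_measurable_lebesgue_integral[OF X2m] .
  have fm: "f \<in> borel_measurable P"
    unfolding f_def L2_norm_def using intm by measurable

  have fb: "\<bar>f om\<bar> \<le> 3 * C" for om
  proof -
    have "f om \<le> 3 * C" unfolding f_def by (rule L2_bound[OF Q(1) Xom]) (rule Xb)
    moreover have "f om \<ge> 0" unfolding f_def by (rule L2_nonneg[OF Q(1)])
    ultimately show ?thesis by simp
  qed

  have fd: "\<bar>f (om(j:=y)) - f om\<bar> \<le> 4 * C / real m" if "j < m" for om j y
  proof -
    have diff: "X (om(j:=y)) x - X om x = (1 / real m) * (Y x y - Y x (om j))" for x
    proof -
      have "X (om(j:=y)) x - X om x = (1 / real m) * ((\<Sum>j'<m. Y x ((om(j:=y)) j')) - (\<Sum>j'<m. Y x (om j')))"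
        unfolding X_def by (simp only: right_diff_distrib)
      then show ?thesis by (simp only: sum_upd_diff[OF that])
    qed
    have db: "\<bar>X (om(j:=y)) x - X om x\<bar> \<le> 4 * C / real m" for x
    proof -
      have "\<bar>Y x y - Y x (om j)\<bar> \<le> 4 * C"
        using hb[of y x] hb[of "om j" x] unfolding Y_def by linarith
      then show ?thesis unfolding diff using m by (simp add: abs_mult field_simps)
    qed
    have "\<bar>f (om(j:=y)) - f om\<bar> \<le> L2_norm Q (\<lambda>x. X (om(j:=y)) x - X om x)"
      unfolding f_def by (rule L2_diff[OF Q(1) Xom Xb Xom Xb])
    also have "\<dots> \<le> 4 * C / real m"
      by (rule L2_bound[OF Q(1) borel_measurable_diff[OF Xom Xom]]) (rule db)
    finally show ?thesis .
  qed

  have Y_meas: "(\<lambda>v. Y x v) \<in> borel_measurable F" for x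
    unfolding Y_def h_def F_def rf_g_def feature_dist_def by measurable
  have rf_int: "integrable F (\<lambda>v. rf_g C (fst v) (snd v) z x)" for z x
    by (rule Fp.integrable_const_bound[where B="2*C"]) (use rb rf_meas[OF p_nonneg p_int ck_pos] in \<open>auto simp: F_def intro!: AE_I2\<close>)
  have h_int: "integrable F (\<lambda>v. h v x)" for x
    unfolding h_def using rf_int by simp
  have Eh: "(\<integral>v. h v x \<partial>F) = K x" for x
  proof -
    have "(\<integral>v. h v x \<partial>F) = (1 / real n) * (\<Sum>i<n. \<integral>v. rf_g C (fst v) (snd v) (zs i) x \<partial>F)"
      unfolding h_def using rf_int by (simp add: integral_sum)
    also have "\<dots> = K x"
      unfolding K_def kme_def k_def C_def F_def int_rf[OF p_nonneg p_int ck_pos] ..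
    finally show ?thesis .
  qed
  have EY: "(\<integral>v. Y x v \<partial>F) = 0" for x
    unfolding Y_def using h_int Eh by (simp add: Fp.prob_space)
  have EY2: "(\<integral>v. (Y x v)\<^sup>2 \<partial>F) \<le> 4 * C\<^sup>2" for x
  proof -
    have hsq: "(h v x)\<^sup>2 \<le> 4 * C\<^sup>2" for v
    proof -
      have "\<bar>h v x\<bar>\<^sup>2 \<le> (2 * C)\<^sup>2" by (rule power_mono[OF hb]) simp
      then show ?thesis by (simp add: power_mult_distrib)
    qed
    have h_meas: "(\<lambda>v. h v x) \<in> borel_measurable F"
      unfolding h_def F_def rf_g_def feature_dist_def by measurable
    have h2_int: "integrable F (\<lambda>v. (h v x)\<^sup>2)"
    proof (rule Fp.integrable_const_bound[where B="4*C\<^sup>2"])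
      show "AE v in F. norm ((h v x)\<^sup>2) \<le> 4 * C\<^sup>2"
        by (rule AE_I2) (use hsq in simp)
    qed (use h_meas in measurable)
    have "(\<integral>v. (h v x - (\<integral>v. h v x \<partial>F))\<^sup>2 \<partial>F) = (\<integral>v. (h v x)\<^sup>2 \<partial>F) - (\<integral>v. h v x \<partial>F)\<^sup>2"
      by (rule Fp.variance_eq[OF h_int h2_int])
    then have "(\<integral>v. (Y x v)\<^sup>2 \<partial>F) = (\<integral>v. (h v x)\<^sup>2 \<partial>F) - (K x)\<^sup>2"
      unfolding Eh Y_def by (simp add: power2_commute)
    also have "\<dots> \<le> (\<integral>v. (h v x)\<^sup>2 \<partial>F)" by simp
    also have "\<dots> \<le> (\<integral>v. 4 * C\<^sup>2 \<partial>F)"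
    proof (rule integral_mono[OF h2_int])
      fix v
      show "(h v x)\<^sup>2 \<le> 4 * C\<^sup>2" by (rule hsq)
    qed simp
    finally show ?thesis by (simp add: Fp.prob_space)
  qed
  have EX2: "(\<integral>om. (X om x)\<^sup>2 \<partial>P) \<le> 4 * C\<^sup>2 / real m" for x
  proof -
    have "(\<integral>om. (X om x)\<^sup>2 \<partial>P) = (1 / real m)\<^sup>2 * (\<integral>om. (\<Sum>j<m. Y x (om j))\<^sup>2 \<partial>P)"
      unfolding X_def power_mult_distrib by (rule integral_mult_right_zero)
    also have "(\<integral>om. (\<Sum>j<m. Y x (om j))\<^sup>2 \<partial>P) = real m * (\<integral>v. (Y x v)\<^sup>2 \<partial>F)"
      unfolding P_def by (rule sum_sq_integral[OF Fp.prob_space_axioms Y_meas _ EY]) (rule Yb)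
    also have "(1 / real m)\<^sup>2 * (real m * (\<integral>v. (Y x v)\<^sup>2 \<partial>F)) = (\<integral>v. (Y x v)\<^sup>2 \<partial>F) / real m"
      using m by (simp add: power2_eq_square field_simps)
    also have "\<dots> \<le> 4 * C\<^sup>2 / real m"
      using EY2[of x] m by (simp add: divide_right_mono)
    finally show ?thesis .
  qed
  have X2int: "integrable (P \<Otimes>\<^sub>M Q) (\<lambda>(om, x). (X om x)\<^sup>2)"
  proof -
    interpret PQp: prob_space "P \<Otimes>\<^sub>M Q" by (rule prob_space_pair) unfold_locales
    show ?thesis
    proof (rule PQp.integrable_const_bound[where B="9 * C\<^sup>2"])
      show "AE z in P \<Otimes>\<^sub>M Q. norm ((\<lambda>(om, x). (X om x)\<^sup>2) z) \<le> 9 * C\<^sup>2"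
      proof (rule AE_I2, clarsimp)
        fix om x
        show "(X om x)\<^sup>2 \<le> 9 * C\<^sup>2" by (rule Xsq)
      qed
    qed (rule X2m)
  qed
  have Ef2: "(\<integral>om. (f om)\<^sup>2 \<partial>P) \<le> 4 * C\<^sup>2 / real m"
  proof -
    have "(\<integral>om. (f om)\<^sup>2 \<partial>P) = (\<integral>om. (\<integral>x. (X om x)\<^sup>2 \<partial>Q) \<partial>P)"
      unfolding f_def L2_norm_def by (simp add: integral_nonneg)
    also have "\<dots> = (\<integral>x. (\<integral>om. (X om x)\<^sup>2 \<partial>P) \<partial>Q)"
      using PQ.Fubini_integral[OF X2int] by simp
    also have "\<dots> \<le> (\<integral>x. 4 * C\<^sup>2 / real m \<partial>Q)"
    proof (rule integral_mono)
      show "integrable Q (\<lambda>x. \<integral>om. (X om x)\<^sup>2 \<partial>P)"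
        using PQ.integrable_snd[OF X2int] by simp
    qed (use EX2 in simp_all)
    finally show ?thesis by (simp add: Qp.prob_space)
  qed
  have f_int: "integrable P f"
    by (rule Pp.integrable_const_bound[where B="3*C"]) (use fm fb in auto)
  have fsq: "(f om)\<^sup>2 \<le> 9 * C\<^sup>2" for om
  proof -
    have "\<bar>f om\<bar>\<^sup>2 \<le> (3 * C)\<^sup>2" by (rule power_mono[OF fb]) simp
    then show ?thesis by (simp add: power_mult_distrib)
  qed
  have f2_int: "integrable P (\<lambda>om. (f om)\<^sup>2)"
  proof (rule Pp.integrable_const_bound[where B="9*C\<^sup>2"])
    show "AE om in P. norm ((f om)\<^sup>2) \<le> 9 * C\<^sup>2"
      by (rule AE_I2) (use fsq in simp)
  qed (use fm in measurable)
  have Ef: "(\<integral>om. f om \<partial>P) \<le> 2 * C / sqrt (real m)"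
  proof -
    have "0 \<le> (\<integral>om. (f om - (\<integral>om. f om \<partial>P))\<^sup>2 \<partial>P)" by simp
    also have "\<dots> = (\<integral>om. (f om)\<^sup>2 \<partial>P) - (\<integral>om. f om \<partial>P)\<^sup>2"
      by (rule Pp.variance_eq[OF f_int f2_int])
    finally have "(\<integral>om. f om \<partial>P)\<^sup>2 \<le> 4 * C\<^sup>2 / real m" using Ef2 by linarith
    then have "sqrt ((\<integral>om. f om \<partial>P)\<^sup>2) \<le> sqrt (4 * C\<^sup>2 / real m)" by (rule real_sqrt_le_mono)
    also have "sqrt (4 * C\<^sup>2 / real m) = 2 * C / sqrt (real m)"
      using C by (simp add: real_sqrt_divide real_sqrt_mult)
    finally show ?thesis by simp
  qed

  define t where "t = 2 * C / sqrt (real m) * sqrt (2 * L)"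
  have t: "t > 0" unfolding t_def using C L m by simp
  have tail: "measure P {om \<in> space P. f om - (\<integral>om'. f om' \<partial>P) \<ge> t} \<le> exp (- 2 * t\<^sup>2 / (real m * (4 * C / real m)\<^sup>2))"
    unfolding P_def
    by (rule mcdiarmid_tail[OF Fp.prob_space_axioms _ t m])
       (use C m fm fb fd in \<open>simp_all add: P_def\<close>)
  have t2: "t\<^sup>2 = 8 * C\<^sup>2 * L / real m"
  proof -
    have "t\<^sup>2 = (2 * C)\<^sup>2 / (sqrt (real m))\<^sup>2 * (sqrt (2 * L))\<^sup>2"
      unfolding t_def by (simp only: power_mult_distrib power_divide)
    also have "\<dots> = (2 * C)\<^sup>2 / real m * (2 * L)" using L by simp
    finally show ?thesis by (simp add: power_mult_distrib)
  qed
  have expo: "- 2 * t\<^sup>2 / (real m * (4 * C / real m)\<^sup>2) = - L"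
    unfolding t2 using C m by (simp add: power2_eq_square field_simps)
  have "exp (- L) = \<delta> / real n"
    unfolding L_def using n \<delta> by (simp add: exp_minus exp_ln)
  moreover have "\<delta> / real n \<le> \<delta>"
    using n \<delta> by (simp add: divide_le_eq mult_le_cancel_left1)
  ultimately have tail': "measure P {om \<in> space P. f om - (\<integral>om'. f om' \<partial>P) \<ge> t} \<le> \<delta>"
    using tail unfolding expo by linarith

  define \<epsilon> where "\<epsilon> = 2 * ck p / sqrt (real m) * (1 + sqrt (2 * ln (real n / \<delta>)))"
  have eps: "\<epsilon> = 2 * C / sqrt (real m) + t"
    unfolding \<epsilon>_def t_def C_def L_def by (simp add: algebra_simps)
  define S where "S = {om \<in> space P. f om \<le> \<epsilon>}"
  have S_sets: "S \<in> sets P" unfolding S_def using fm by measurable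
  have sub: "space P - S \<subseteq> {om \<in> space P. f om - (\<integral>om'. f om' \<partial>P) \<ge> t}"
    unfolding S_def using Ef eps by auto
  have tset: "{om \<in> space P. f om - (\<integral>om'. f om' \<partial>P) \<ge> t} \<in> sets P"
    using fm by measurable
  have "measure P (space P - S) \<le> \<delta>"
    using Pp.finite_measure_mono[OF sub tset] tail' by linarith
  then have "measure P S \<ge> 1 - \<delta>"
    using Pp.prob_compl[OF S_sets] by simp
  moreover have "{\<omega> \<in> space (PiM {..<m} (\<lambda>_. feature_dist p)).
              L2_norm Q (\<lambda>x. kme k n zs x - (1 / real n) * (\<Sum>i<n. ghat (ck p) m \<omega> (zs i) x))
                \<le> 2 * ck p / sqrt (real m) * (1 + sqrt (2 * ln (real n / \<delta>)))} = S"
    unfolding S_def f_def \<epsilon>_def P_def F_def X_eq ..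
  ultimately show ?thesis unfolding P_def F_def by simp
qed


end
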